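(* Let $l\geq 0$ be an integer. Then $f_2(8l+i)=6l+i$ for every $i$ with $0\leq i\leq 5$, and $f_2(8l+6)=f_2(8l+7)=6l+5$.
   Context: $\Sigma_k=\{0,1,\ldots,k-1\}$. A border of a word $w$ is a non-empty word that is both a proper prefix and a proper suffix of $w$; $w$ is unbordered if it has no border. A border $u$ of $w$ is non-overlapping if $|u|\le |w|/2$. The smallest BP-factorization of a word $w$ is the factorization $w=w_m\cdots w_1w_0w_1\cdots w_m$ ($m\ge 0$) in which, for each $i\ge 1$, $w_i$ is the longest non-overlapping border of $w_i\cdots w_1w_0w_1\cdots w_i$, and $w_0$ is either empty or unbordered (i.e., one repeatedly removes the longest non-overlapping border from both ends until an empty or unbordered central word remains). Its width is $2m+1$ if $w_0$ is non-empty and $2m$ if $w_0$ is empty. $f_k(n)$ denotes the maximum width of the smallest BP-factorization over all length-$n$ words over $\Sigma_k$. *)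

theory Defs
  imports "HOL-Library.Sublist"
begin

definition is_border :: "nat list \<Rightarrow> nat list \<Rightarrow> bool" where
  "is_border u w \<longleftrightarrow> u \<noteq> [] \<and> length u < length w \<and> prefix u w \<and> suffix u w"

definition unbordered :: "nat list \<Rightarrow> bool" where
  "unbordered w \<longleftrightarrow> \<not> (\<exists>u. is_border u w)"

definition lnob :: "nat list \<Rightarrow> nat" where
  "lnob w = Max (length ` {u. is_border u w \<and> 2 * length u \<le> length w})"

definition bp_mid :: "nat list \<Rightarrow> nat list" where
  "bp_mid w = drop (lnob w) (take (length w - lnob w) w)"

text \<open>bp_rel w m: the smallest BP-factorization of w has width m.\<close>
inductive bp_rel :: "nat list \<Rightarrow> nat \<Rightarrow> bool" where
  bp_empty: "bp_rel [] 0"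
| bp_unb: "w \<noteq> [] \<Longrightarrow> unbordered w \<Longrightarrow> bp_rel w 1"
| bp_step: "w \<noteq> [] \<Longrightarrow> \<not> unbordered w \<Longrightarrow> bp_rel (bp_mid w) m \<Longrightarrow> bp_rel w (m + 2)"

definition bp_width :: "nat list \<Rightarrow> nat" where
  "bp_width w = (THE m. bp_rel w m)"

definition f :: "nat \<Rightarrow> nat \<Rightarrow> nat" where
  "f k n = Max {bp_width w | w. length w = n \<and> set w \<subseteq> {0..<k}}"

end

theory Submission
  imports Defs
begin


definition bd :: "nat \<Rightarrow> nat list \<Rightarrow> bool" where
  "bd k w \<longleftrightarrow> 0 < k \<and> k < length w \<and> (\<forall>j<k. w!j = w!(length w - k + j))"

lemma take_drop_eq_nth:
  assumes "k \<le> length w"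
  shows "take k w = drop (length w - k) w \<longleftrightarrow> (\<forall>j<k. w!j = w!(length w - k + j))"
  using assms by (auto simp: list_eq_iff_nth_eq)

lemma bd_take: "bd k w \<longleftrightarrow> 0 < k \<and> k < length w \<and> take k w = drop (length w - k) w"
  unfolding bd_def using take_drop_eq_nth[of k w] by auto

lemma prefix_take_iff: "prefix u w \<longleftrightarrow> length u \<le> length w \<and> take (length u) w = u"
proof
  assume "prefix u w" then obtain zs where "w = u @ zs" by (auto simp: prefix_def)
  then show "length u \<le> length w \<and> take (length u) w = u" by simp
next
  assume "length u \<le> length w \<and> take (length u) w = u"
  then have "w = u @ drop (length u) w" by (metis append_take_drop_id)
  then show "prefix u w" unfolding prefix_def by blast
qed

lemma suffix_drop_iff: "suffix u w \<longleftrightarrow> length u \<le> length w \<and> drop (length w - length u) w = u"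
proof
  assume "suffix u w" then obtain zs where "w = zs @ u" by (auto simp: suffix_def)
  then show "length u \<le> length w \<and> drop (length w - length u) w = u" by simp
next
  assume "length u \<le> length w \<and> drop (length w - length u) w = u"
  then have "w = take (length w - length u) w @ u" by (metis append_take_drop_id)
  then show "suffix u w" unfolding suffix_def by blast
qed

lemma is_border_bd: "is_border u w \<longleftrightarrow> u = take (length u) w \<and> bd (length u) w"
  unfolding is_border_def bd_take prefix_take_iff suffix_drop_iff by auto

definition B :: "nat list \<Rightarrow> nat set" where
  "B w = {k. bd k w \<and> 2 * k \<le> length w}"

lemma B_eq: "length ` {u. is_border u w \<and> 2 * length u \<le> length w} = B w"
proof
  show "length ` {u. is_border u w \<and> 2 * length u \<le> length w} \<subseteq> B w"
    by (auto simp: B_def is_border_bd)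
  show "B w \<subseteq> length ` {u. is_border u w \<and> 2 * length u \<le> length w}"
  proof
    fix k assume "k \<in> B w"
    then have "bd k w" "2*k \<le> length w" by (auto simp: B_def)
    moreover have "length (take k w) = k" using \<open>bd k w\<close> by (simp add: bd_def)
    ultimately show "k \<in> length ` {u. is_border u w \<and> 2 * length u \<le> length w}"
      by (intro image_eqI[of _ _ "take k w"]) (auto simp: is_border_bd)
  qed
qed

lemma lnob_B: "lnob w = Max (B w)"
  unfolding lnob_def B_eq ..

lemma finite_B: "finite (B w)"
  by (rule finite_subset[of _ "{..length w}"]) (auto simp: B_def)

lemma short_border: "bd k w \<Longrightarrow> \<exists>k'. bd k' w \<and> 2 * k' \<le> length w"
proof (induction k rule: less_induct)
  case (less k)
  show ?case
  proof (cases "2 * k \<le> length w")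
    case True then show ?thesis using less.prems by blast
  next
    case False
    let ?n = "length w"
    define p where "p = ?n - k"
    have per: "\<And>j. j < k \<Longrightarrow> w!j = w!(p+j)" using less.prems by (auto simp: bd_def p_def)
    have "bd (k - p) w" unfolding bd_def
    proof (intro conjI allI impI)
      show "0 < k - p" "k - p < ?n" using False less.prems by (auto simp: bd_def p_def)
      fix j assume j: "j < k - p"
      have "?n - (k - p) + j = p + (p + j)" using False less.prems by (auto simp: bd_def p_def)
      moreover have "w!j = w!(p+j)" using per j by auto
      moreover have "w!(p+j) = w!(p+(p+j))" using per j by auto
      ultimately show "w!j = w!(?n - (k - p) + j)" by (simp add: add.assoc)
    qed
    moreover have "k - p < k" using False less.prems by (auto simp: bd_def p_def)
    ultimately show ?thesis using less.IH by blast
  qed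
qed

lemma unbordered_bd: "unbordered w \<longleftrightarrow> (\<forall>k. \<not> bd k w)"
proof
  assume "unbordered w"
  show "\<forall>k. \<not> bd k w"
  proof (intro allI notI)
    fix k assume "bd k w"
    then have "length (take k w) = k" by (simp add: bd_def)
    then have "is_border (take k w) w" using \<open>bd k w\<close> by (simp add: is_border_bd)
    then show False using \<open>unbordered w\<close> unfolding unbordered_def by blast
  qed
next
  assume "\<forall>k. \<not> bd k w"
  then show "unbordered w" unfolding unbordered_def is_border_bd by blast
qed

lemma lnob_props:
  assumes "\<not> unbordered w"
  shows "lnob w \<in> B w" "\<And>j. j \<in> B w \<Longrightarrow> j \<le> lnob w"
proof -
  obtain k where "bd k w" using assms unbordered_bd by blast
  then obtain k' where "bd k' w \<and> 2 * k' \<le> length w" using short_border by blast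
  then have ne: "B w \<noteq> {}" by (auto simp: B_def)
  show "lnob w \<in> B w" unfolding lnob_B using ne finite_B by (rule Max_in[rotated])
  show "\<And>j. j \<in> B w \<Longrightarrow> j \<le> lnob w" unfolding lnob_B by (rule Max_ge[OF finite_B])
qed

lemma lnob_eqI: "k \<in> B w \<Longrightarrow> (\<And>j. j \<in> B w \<Longrightarrow> j \<le> k) \<Longrightarrow> lnob w = k"
  unfolding lnob_B using finite_B by (intro Max_eqI) auto

lemma bp_rel_fun: "bp_rel w m \<Longrightarrow> bp_rel w m' \<Longrightarrow> m = m'"
proof (induction arbitrary: m' rule: bp_rel.induct)
  case bp_empty from bp_empty.prems show ?case by (cases rule: bp_rel.cases) auto
next
  case (bp_unb w) from bp_unb.prems show ?case by (cases rule: bp_rel.cases) (use bp_unb in auto)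
next
  case (bp_step w m) from bp_step.prems show ?case
  proof (cases rule: bp_rel.cases)
    case bp_empty then show ?thesis using bp_step.hyps(1) by simp
  next
    case bp_unb then show ?thesis using bp_step.hyps(2) by simp
  next
    case (bp_step m'') then show ?thesis using bp_step.IH by simp
  qed
qed

lemma len_mid: "\<not> unbordered w \<Longrightarrow> length (bp_mid w) = length w - 2 * lnob w"
  using lnob_props(1)[of w] by (auto simp: bp_mid_def B_def)

lemma nth_mid: "\<not> unbordered w \<Longrightarrow> j < length (bp_mid w) \<Longrightarrow> bp_mid w ! j = w ! (lnob w + j)"
  using lnob_props(1)[of w] by (auto simp: bp_mid_def B_def len_mid)

lemma bp_rel_ex: "\<exists>m. bp_rel w m"
proof (induction "length w" arbitrary: w rule: less_induct)
  case less
  show ?case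
  proof (cases "w = []")
    case True then show ?thesis using bp_empty by blast
  next
    case ne: False
    show ?thesis
    proof (cases "unbordered w")
      case True then show ?thesis using ne bp_unb by blast
    next
      case False
      have "0 < lnob w" using lnob_props(1)[OF False] by (auto simp: B_def bd_def)
      then have "length (bp_mid w) < length w" using len_mid[OF False] ne by simp
      then obtain m where "bp_rel (bp_mid w) m" using less by blast
      then show ?thesis using bp_step[OF ne False] by blast
    qed
  qed
qed

lemma width_eq: "bp_rel w m \<Longrightarrow> bp_width w = m"
  unfolding bp_width_def using bp_rel_fun by blast

lemma width_nil: "bp_width [] = 0" by (rule width_eq) (rule bp_empty)
lemma width_unb: "w \<noteq> [] \<Longrightarrow> unbordered w \<Longrightarrow> bp_width w = 1" by (rule width_eq) (rule bp_unb)
lemma width_step: "w \<noteq> [] \<Longrightarrow> \<not> unbordered w \<Longrightarrow> bp_width w = bp_width (bp_mid w) + 2"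
proof -
  assume a: "w \<noteq> []" "\<not> unbordered w"
  obtain m where m: "bp_rel (bp_mid w) m" using bp_rel_ex by blast
  have "bp_rel w (m + 2)" by (rule bp_step[OF a m])
  then show ?thesis using width_eq m by simp
qed



definition h :: "nat \<Rightarrow> nat" where "h n = 6 * (n div 8) + min (n mod 8) 5"

lemma h_split: "r < 8 \<Longrightarrow> h (8*q + r) = 6*q + min r 5" unfolding h_def by simp

lemma h_cases: obtains q r where "n = 8*q + r" "r < (8::nat)"
proof
  show "n = 8 * (n div 8) + n mod 8" by simp
  show "n mod 8 < (8::nat)" by simp
qed

lemma h_le: assumes "a + d \<le> b" 
  and c0: "\<And>r r'. r < 8 \<Longrightarrow> r' < 8 \<Longrightarrow> r + d \<le> r' \<Longrightarrow> min r 5 + c \<le> min r' (5::nat)"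
  and c1: "\<And>r r'. r < 8 \<Longrightarrow> r' < 8 \<Longrightarrow> r + d \<le> 8 + r' \<Longrightarrow> min r 5 + c \<le> 6 + min r' (5::nat)"
  and c2: "c \<le> 7"
  shows "h a + c \<le> h b"
proof -
  obtain q r where a: "a = 8*q+r" "r<8" by (rule h_cases)
  obtain q' r' where b: "b = 8*q'+r'" "r'<8" by (rule h_cases)
  have ha: "h a = 6*q + min r 5" using a h_split by simp
  have hb: "h b = 6*q' + min r' 5" using b h_split by simp
  have "q \<le> q'"
  proof (rule ccontr)
    assume "\<not> q \<le> q'" then have "8*q' + 8 \<le> 8*q" by simp
    then show False using assms(1) a b by linarith
  qed
  then consider "q' = q" | "q' = q + 1" | "q + 2 \<le> q'" by linarith
  then show ?thesis
  proof cases
    case 1 then have "r + d \<le> r'" using assms(1) a b by simp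
    then show ?thesis using c0[OF a(2) b(2)] ha hb 1 by simp
  next
    case 2 then have "r + d \<le> 8 + r'" using assms(1) a b by simp
    then show ?thesis using c1[OF a(2) b(2)] ha hb 2 by simp
  next
    case 3 then have "6*q + 12 \<le> 6*q'" by simp
    then show ?thesis using ha hb c2 by (simp add: min_def)
  qed
qed

lemma h_mono: "a \<le> b \<Longrightarrow> h a \<le> h b"
  using h_le[of a 0 b 0] by (simp add: min_def)
lemma h4: "4 \<le> n \<Longrightarrow> h (n - 4) + 2 \<le> h n"
  by (rule h_le[of _ 4]) (auto simp: min_def)
lemma h6: "6 \<le> n \<Longrightarrow> h (n - 6) + 4 \<le> h n"
  by (rule h_le[of _ 6]) (auto simp: min_def)
lemma h8: "8 \<le> n \<Longrightarrow> h (n - 8) + 6 \<le> h n"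
  by (rule h_le[of _ 8]) (auto simp: min_def)
lemma hsmall: "h 0 = 0" "h 1 = 1" "h 2 = 2" "h 3 = 3" "h 4 = 4" "h 5 = 5"
  unfolding h_def by simp_all
lemma h1: "1 \<le> n \<Longrightarrow> 1 \<le> h n" using h_mono[of 1 n] hsmall by simp
lemma h3: "3 \<le> n \<Longrightarrow> 3 \<le> h n" using h_mono[of 3 n] hsmall by simp
lemma h5: "5 \<le> n \<Longrightarrow> 5 \<le> h n" using h_mono[of 5 n] hsmall by simp



lemma mid_sub: "set (bp_mid w) \<subseteq> set w"
  unfolding bp_mid_def by (meson order.trans set_drop_subset set_take_subset)

lemma lnob_facts: assumes "\<not> unbordered w"
  shows "0 < lnob w" "2 * lnob w \<le> length w" "\<forall>j<lnob w. w!j = w!(length w - lnob w + j)"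
proof -
  have "bd (lnob w) w \<and> 2*lnob w \<le> length w" using lnob_props(1)[OF assms] by (simp add: B_def)
  then show "0 < lnob w" "2 * lnob w \<le> length w" "\<forall>j<lnob w. w!j = w!(length w - lnob w + j)"
    unfolding bd_def by blast+
qed

lemma bin_nth: "set w \<subseteq> {0..<2::nat} \<Longrightarrow> j < length w \<Longrightarrow> w!j < 2"
proof -
  assume a: "set w \<subseteq> {0..<2::nat}" and b: "j < length w"
  have "w!j \<in> set w" using b by simp
  then have "w!j \<in> {0..<2}" using a by blast
  then show "w!j < 2" by simp
qed

lemma bad_case:
  assumes bin: "set w \<subseteq> {0..<2}"
    and w: "\<not> unbordered w" "lnob w = 1"
    and y: "\<not> unbordered (bp_mid w)" "lnob (bp_mid w) = 1"
    and z: "\<not> unbordered (bp_mid (bp_mid w))" "lnob (bp_mid (bp_mid w)) = 1"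
  shows False
proof -
  let ?n = "length w"
  define y where "y = bp_mid w"
  define z where "z = bp_mid y"
  have ly: "length y = ?n - 2" using len_mid[OF w(1)] w(2) by (simp add: y_def)
  have ny: "\<And>j. j < length y \<Longrightarrow> y!j = w!(1+j)" using nth_mid[OF w(1)] w(2) by (simp add: y_def)
  have yb: "\<not> unbordered y" "lnob y = 1" using y by (simp_all add: y_def)
  have lz: "length z = length y - 2" using len_mid[OF yb(1)] yb(2) by (simp add: z_def)
  have nz: "\<And>j. j < length z \<Longrightarrow> z!j = y!(1+j)" using nth_mid[OF yb(1)] yb(2) by (simp add: z_def)
  have zb: "\<not> unbordered z" "lnob z = 1" using z by (simp_all add: z_def y_def)
  have "1 \<in> B z" using lnob_props(1)[OF zb(1)] zb(2) by simp
  then have z1: "1 < length z" "z!0 = z!(length z - 1)" by (auto simp: B_def bd_def)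
  have y1: "y!0 = y!(length y - 1)" using lnob_props(1)[OF yb(1)] yb(2) by (auto simp: B_def bd_def)
  have w1: "w!0 = w!(?n - 1)" using lnob_props(1)[OF w(1)] w(2) by (auto simp: B_def bd_def)
  have n6: "6 \<le> ?n" using z1 lz ly by simp
  have e1: "w!1 = w!(?n-2)"
  proof -
    have i: "1 + (length y - 1) = ?n - 2" using ly n6 by simp
    have "y!(length y - 1) = w!(1 + (length y - 1))" using ny[of "length y - 1"] ly n6 by simp
    then have "y!(length y - 1) = w!(?n-2)" by (simp only: i)
    moreover have "y!0 = w!1" using ny[of 0] ly n6 by simp
    ultimately show ?thesis using y1 by simp
  qed
  have e2: "w!2 = w!(?n-3)"
  proof -
    have i: "1 + (1 + (length z - 1)) = ?n - 3" using lz ly n6 by simp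
    have "z!(length z - 1) = w!(1 + (1 + (length z - 1)))" using nz[of "length z - 1"] ny[of "1 + (length z - 1)"] lz ly n6 z1 by simp
    then have "z!(length z - 1) = w!(?n-3)" by (simp only: i)
    moreover have "z!0 = w!2" using nz[of 0] ny[of 1] lz ly n6 z1 by (simp add: numeral_2_eq_2)
    ultimately show ?thesis using z1 by simp
  qed
  have wne: "w \<noteq> []" using n6 by auto
  have b0: "w!0 < 2" "w!1 < 2" "w!2 < 2" using wne bin_nth[OF bin, of 0] bin_nth[OF bin, of 1] bin_nth[OF bin, of 2] n6 by simp_all
  consider "w!0 = w!1" | "w!2 = w!0" | "w!0 \<noteq> w!1 \<and> w!2 = w!1" using b0 by linarith
  then show False
  proof cases
    case 1
    have "2 \<in> B w" unfolding B_def bd_def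
    proof (intro CollectI conjI allI impI)
      fix j :: nat assume "j < 2" then have "j = 0 \<or> j = 1" by auto
      then show "w!j = w!(?n - 2 + j)" using 1 e1 w1 n6
        by (auto simp: numeral_2_eq_2 Suc_diff_Suc)
    qed (use n6 in auto)
    then show False using lnob_props(2)[OF w(1)] w(2) by fastforce
  next
    case 2
    have "3 \<in> B w" unfolding B_def bd_def
    proof (intro CollectI conjI allI impI)
      fix j :: nat assume "j < 3" then have "j = 0 \<or> j = 1 \<or> j = 2" by auto
      then show "w!j = w!(?n - 3 + j)" using 2 e1 e2 w1 n6
        by (auto simp: numeral_3_eq_3 numeral_2_eq_2 Suc_diff_Suc)
    qed (use n6 in auto)
    then show False using lnob_props(2)[OF w(1)] w(2) by fastforce
  next
    case 3
    have "2 \<in> B y" unfolding B_def bd_def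
    proof (intro CollectI conjI allI impI)
      fix j :: nat assume "j < 2" then have "j = 0 \<or> j = 1" by auto
      then show "y!j = y!(length y - 2 + j)" using 3 e1 e2 n6 ny[of 0] ny[of 1] ny[of "length y - 2"] ny[of "length y - 1"] ly
        by (auto simp: numeral_2_eq_2 numeral_3_eq_3 Suc_diff_Suc)
    qed (use n6 ly in auto)
    then show False using lnob_props(2)[OF yb(1)] yb(2) by fastforce
  qed
qed



lemma UB: "set w \<subseteq> {0..<2::nat} \<Longrightarrow> bp_width w \<le> h (length w)"
proof (induction "length w" arbitrary: w rule: less_induct)
  case less
  note bin = less.prems
  let ?n = "length w"
  show ?case
  proof (cases "w = []")
    case True then show ?thesis by (simp add: width_nil)
  next
    case wne: False
    show ?thesis
    proof (cases "unbordered w")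
      case True
      have "1 \<le> ?n" using wne by (cases w) auto
      then show ?thesis using wne True width_unb[OF wne True] h1[of ?n] by simp
    next
      case wb: False
      define y where "y = bp_mid w"
      have wy: "bp_width w = bp_width y + 2" using width_step[OF wne wb] y_def by simp
      have ly: "length y = ?n - 2 * lnob w" using len_mid[OF wb] y_def by simp
      have binY: "set y \<subseteq> {0..<2}" using mid_sub[of w] bin y_def by blast
      note lf = lnob_facts[OF wb]
      show ?thesis
      proof (cases "lnob w \<ge> 2")
        case True
        have "length y < ?n" "length y \<le> ?n - 4" using ly lf True by auto
        then have "bp_width y \<le> h (?n - 4)" using less.hyps[OF _ binY] h_mono[of "length y" "?n-4"] by fastforce
        then show ?thesis using wy h4[of ?n] lf True by simp
      next
        case False
        then have b1: "lnob w = 1" using lf by simp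
        show ?thesis
        proof (cases "y = []")
          case True then have "?n = 2" using ly b1 lf by simp
          then show ?thesis using wy True width_nil hsmall by simp
        next
          case yne: False
          show ?thesis
          proof (cases "unbordered y")
            case True
            have "3 \<le> ?n" using ly b1 yne by (cases y) auto
            then show ?thesis using wy width_unb[OF yne True] h3[of ?n] by simp
          next
            case yb: False
            define z where "z = bp_mid y"
            have yz: "bp_width y = bp_width z + 2" using width_step[OF yne yb] z_def by simp
            have lz: "length z = length y - 2 * lnob y" using len_mid[OF yb] z_def by simp
            have binZ: "set z \<subseteq> {0..<2}" using mid_sub[of y] binY z_def by blast
            note lf' = lnob_facts[OF yb]
            show ?thesis
            proof (cases "lnob y \<ge> 2")
              case True
              have "length z < ?n" "length z \<le> ?n - 6" using lz ly lf' True b1 by auto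
              then have "bp_width z \<le> h (?n - 6)" using less.hyps[OF _ binZ] h_mono[of "length z" "?n-6"] by fastforce
              moreover have "6 \<le> ?n" using lz ly lf' True b1 by auto
              ultimately show ?thesis using wy yz h6[of ?n] by simp
            next
              case False
              then have b1': "lnob y = 1" using lf' by simp
              show ?thesis
              proof (cases "z = []")
                case True then have "?n = 4" using lz ly b1 b1' lf' lf yne by auto
                then show ?thesis using wy yz True width_nil hsmall by simp
              next
                case zne: False
                show ?thesis
                proof (cases "unbordered z")
                  case True
                  have "5 \<le> ?n" using lz ly b1 b1' zne lf by (cases z) auto
                  then show ?thesis using wy yz width_unb[OF zne True] h5[of ?n] by simp
                next
                  case zb: False
                  define u where "u = bp_mid z"
                  have zu: "bp_width z = bp_width u + 2" using width_step[OF zne zb] u_def by simp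
                  have lu: "length u = length z - 2 * lnob z" using len_mid[OF zb] u_def by simp
                  have binU: "set u \<subseteq> {0..<2}" using mid_sub[of z] binZ u_def by blast
                  note lf'' = lnob_facts[OF zb]
                  show ?thesis
                  proof (cases "lnob z \<ge> 2")
                    case True
                    have "length u < ?n" "length u \<le> ?n - 8" using lu lz ly lf'' lf' True b1 b1' by auto
                    then have "bp_width u \<le> h (?n - 8)" using less.hyps[OF _ binU] h_mono[of "length u" "?n-8"] by fastforce
                    moreover have "8 \<le> ?n" using lu lz ly lf'' lf' True b1 b1' by auto
                    ultimately show ?thesis using wy yz zu h8[of ?n] by simp
                  next
                    case False
                    then have "lnob z = 1" using lf'' by simp
                    then show ?thesis using bad_case[OF bin wb b1] yb b1' zb y_def z_def by simp
                  qed
                qed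
              qed
            qed
          qed
        qed
      qed
    qed
  qed
qed



fun pw :: "nat \<Rightarrow> nat list \<Rightarrow> nat list" where
  "pw 0 u = []" | "pw (Suc l) u = u @ pw l u"

lemma pw_Suc': "pw (Suc l) u = pw l u @ u" by (induction l) auto
lemma pw_len[simp]: "length (pw l u) = l * length u" by (induction l) auto
lemma pw_set: "set (pw l u) \<subseteq> set u" by (induction l) auto

definition X :: "nat list \<Rightarrow> nat \<Rightarrow> nat list" where
  "X x0 l = pw l [0,1,0,1] @ x0 @ pw l [0,1,1,0]"

lemma X_Suc: "X x0 (Suc l) = [0,1,0,1] @ X x0 l @ [0,1,1,0]"
proof -
  have "pw (Suc l) [0,1,1,0] = pw l [0,1,1,0] @ [0,1,1,0]" by (rule pw_Suc')
  then show ?thesis unfolding X_def by simp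
qed

lemma X_len: "length (X x0 l) = 8 * l + length x0" unfolding X_def by simp

lemma no_border_long:
  assumes "suffix s w" "length s \<le> j" "2 * j \<le> length w" "take j w = drop (length w - j) w"
  shows "sublist s (take (length w div 2) w)"
proof -
  have "suffix (drop (length w - j) w) w" by (rule suffix_drop)
  moreover have "length s \<le> length (drop (length w - j) w)" using assms by simp
  ultimately have "suffix s (drop (length w - j) w)" using assms(1) suffix_length_suffix by blast
  then have "suffix s (take j w)" using assms(4) by simp
  moreover have "take j w = take j (take (length w div 2) w)" using assms(3) by (simp add: min_def)
  ultimately have "suffix s (take j (take (length w div 2) w))" by simp
  then have "sublist s (take j (take (length w div 2) w))" by (rule suffix_imp_sublist)
  moreover have "sublist (take j (take (length w div 2) w)) (take (length w div 2) w)" by (rule sublist_take)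
  ultimately show ?thesis using sublist_order.order_trans by blast
qed

lemma lnob_by_suffix:
  assumes "k \<in> B w" "suffix s w" "\<not> sublist s (take (length w div 2) w)"
    "\<And>j. k < j \<Longrightarrow> j < length s \<Longrightarrow> 2*j \<le> length w \<Longrightarrow> take j w \<noteq> drop (length w - j) w"
  shows "lnob w = k"
proof (rule lnob_eqI[OF assms(1)])
  fix j assume j: "j \<in> B w"
  show "j \<le> k"
  proof (rule ccontr)
    assume "\<not> j \<le> k"
    have e: "take j w = drop (length w - j) w" "2*j \<le> length w" using j by (auto simp: B_def bd_take)
    show False
    proof (cases "j < length s")
      case True then show False using assms(4) e \<open>\<not> j \<le> k\<close> by auto
    next
      case False then show False using no_border_long[OF assms(2) _ e(2) e(1)] assms(3) by simp
    qed
  qed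
qed

lemma Q11: "\<not> sublist [1,1] (1 # P) \<Longrightarrow> \<not> sublist [1::nat,1] (1 # pw l [0,1,0,1] @ P)"
  by (induction l) (auto simp: sublist_Cons_right)

lemma Q00: "\<not> sublist [0,0] (1 # P) \<Longrightarrow> \<not> sublist [0::nat,0] (1 # pw l [0,1,0,1] @ P)"
  by (induction l) (auto simp: sublist_Cons_right)



lemma not_unb: "k \<in> B w \<Longrightarrow> \<not> unbordered w"
  unfolding unbordered_bd B_def by blast

lemma fam_step:
  fixes x0 :: "nat list"
  defines "P0 \<equiv> take (length x0 div 2) x0"
  assumes C1: "\<not> sublist [1,1] (1 # P0)" and C2: "\<not> sublist [0,0] (1 # P0)"
    and C3: "X x0 l = [] \<or> last (X x0 l) = 0"
  shows "bp_width (X x0 (Suc l)) = bp_width (X x0 l) + 6"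
proof -
  let ?u = "[0,1,0,1::nat]"
  let ?X = "X x0 l"
  let ?L = "length ?X"
  have XL: "?L = 8*l + length x0" by (rule X_len)
  have Xd: "?X = pw l ?u @ x0 @ pw l [0,1,1,0]" by (simp add: X_def)
  have tX: "\<And>k. k \<le> length x0 \<Longrightarrow> take (4*l + k) ?X = pw l ?u @ take k x0"
    using Xd by simp
  have q11: "\<not> sublist [1,1] (1 # pw l ?u @ P0)" by (rule Q11[OF C1])
  have q00: "\<not> sublist [0,0] (1 # pw l ?u @ P0)" by (rule Q00[OF C2])
  define w where "w = ?u @ ?X @ [0,1,1,0]"
  define y where "y = [1,0,1] @ ?X @ [0,1,1]"
  define z where "z = [0,1] @ ?X @ [0,1]"
  have lw: "length w = ?L + 8" by (simp add: w_def)
  have ly: "length y = ?L + 6" by (simp add: y_def)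
  have lz: "length z = ?L + 4" by (simp add: z_def)
  have B1: "1 \<in> B w" by (simp add: B_def bd_take w_def)
  have tw: "take (length w div 2) w = ?u @ pw l ?u @ P0"
  proof -
    have "length w div 2 = 4 + (4*l + length x0 div 2)" using lw XL by simp
    then show ?thesis using tX[of "length x0 div 2"] by (simp add: w_def P0_def)
  qed
  have lnw: "lnob w = 1"
  proof (rule lnob_by_suffix[OF B1, of "[1,1,0]"])
    show "suffix [1,1,0] w" by (simp add: w_def suffix_def)
    show "\<not> sublist [1,1,0] (take (length w div 2) w)"
    proof
      assume "sublist [1,1,0] (take (length w div 2) w)"
      moreover have "sublist [1,1] [1,1,0::nat]" by (simp add: sublist_Cons_right)
      ultimately have "sublist [1,1] (?u @ pw l ?u @ P0)" using tw sublist_order.order_trans by metis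
      then show False using q11 by (simp add: sublist_Cons_right)
    qed
    fix j assume "1 < j" "j < length [1,1,0::nat]" "2*j \<le> length w"
    then have "j = 2" by simp
    then show "take j w \<noteq> drop (length w - j) w" by (simp add: w_def)
  qed
  have mw: "bp_mid w = y"
    unfolding bp_mid_def lnw by (simp add: w_def y_def)
  have wne: "w \<noteq> []" by (simp add: w_def)
  have B2: "1 \<in> B y" by (simp add: B_def bd_take y_def)
  have ty: "take (length y div 2) y = [1,0,1] @ pw l ?u @ P0"
  proof -
    have "length y div 2 = 3 + (4*l + length x0 div 2)" using ly XL by simp
    then show ?thesis using tX[of "length x0 div 2"] by (simp add: y_def P0_def)
  qed
  have lny: "lnob y = 1"
  proof (rule lnob_by_suffix[OF B2, of "[1,1]"])
    show "suffix [1,1] y" by (simp add: y_def suffix_def)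
    show "\<not> sublist [1,1] (take (length y div 2) y)"
      using q11 by (simp add: ty sublist_Cons_right)
  qed auto
  have my: "bp_mid y = z"
    unfolding bp_mid_def lny by (simp add: y_def z_def)
  have yne: "y \<noteq> []" by (simp add: y_def)
  have B3: "2 \<in> B z" by (simp add: B_def bd_take z_def)
  have tz: "take (length z div 2) z = [0,1] @ pw l ?u @ P0"
  proof -
    have "length z div 2 = 2 + (4*l + length x0 div 2)" using lz XL by simp
    then show ?thesis using tX[of "length x0 div 2"] by (simp add: z_def P0_def)
  qed
  have lnz: "lnob z = 2"
  proof (cases "?X = []")
    case True
    show ?thesis
    proof (rule lnob_eqI[OF B3])
      fix j assume "j \<in> B z" then show "j \<le> 2" using True by (simp add: B_def z_def)
    qed
  next
    case False
    then have "last ?X = 0" using C3 by simp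
    then obtain X' where X': "?X = X' @ [0]" using False by (metis append_butlast_last_id)
    show ?thesis
    proof (rule lnob_by_suffix[OF B3, of "[0,0,1]"])
      show "suffix [0,0,1] z" unfolding z_def X' by (simp add: suffix_def)
      show "\<not> sublist [0,0,1] (take (length z div 2) z)"
      proof
        assume "sublist [0,0,1] (take (length z div 2) z)"
        moreover have "sublist [0,0] [0,0,1::nat]" by (simp add: sublist_Cons_right)
        ultimately have "sublist [0,0] ([0,1] @ pw l ?u @ P0)" using tz sublist_order.order_trans by metis
        then show False using q00 by (simp add: sublist_Cons_right)
      qed
    qed auto
  qed
  have mz: "bp_mid z = ?X"
    unfolding bp_mid_def lnz by (simp add: z_def)
  have zne: "z \<noteq> []" by (simp add: z_def)
  have "bp_width w = bp_width y + 2" using width_step[OF wne not_unb[OF B1]] mw by simp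
  moreover have "bp_width y = bp_width z + 2" using width_step[OF yne not_unb[OF B2]] my by simp
  moreover have "bp_width z = bp_width ?X + 2" using width_step[OF zne not_unb[OF B3]] mz by simp
  moreover have "X x0 (Suc l) = w" by (simp add: X_Suc w_def)
  ultimately show ?thesis by simp
qed



lemma width_by:
  assumes "k \<in> B w" "list_all (\<lambda>j. take j w \<noteq> drop (length w - j) w) [Suc k..<Suc (length w div 2)]"
  shows "bp_width w = bp_width (drop k (take (length w - k) w)) + 2"
proof -
  have ln: "lnob w = k"
  proof (rule lnob_eqI[OF assms(1)])
    fix j assume j: "j \<in> B w"
    show "j \<le> k"
    proof (rule ccontr)
      assume "\<not> j \<le> k"
      moreover have "j < Suc (length w div 2)" "take j w = drop (length w - j) w" using j by (auto simp: B_def bd_take)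
      ultimately have "Suc k \<le> j \<and> j < Suc (length w div 2)" by simp
      then have "j \<in> set [Suc k..<Suc (length w div 2)]" by (simp only: set_upt atLeastLessThan_iff)
      moreover have "\<forall>x\<in>set [Suc k..<Suc (length w div 2)]. take x w \<noteq> drop (length w - x) w"
        using assms(2) by (simp only: list_all_iff)
      ultimately show False using \<open>take j w = drop (length w - j) w\<close> by blast
    qed
  qed
  have "w \<noteq> []" using assms(1) by (auto simp: B_def bd_def)
  then show ?thesis using width_step[OF _ not_unb[OF assms(1)]] ln by (simp add: bp_mid_def)
qed

lemma unb_by: "list_all (\<lambda>j. take j w \<noteq> drop (length w - j) w) [1..<length w] \<Longrightarrow> unbordered w"
  unfolding unbordered_bd by (auto simp: bd_take list_all_iff)

definition base :: "nat \<Rightarrow> nat list" where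
  "base i = [[],[0],[0,0],[0,1,0],[0,1,1,0],[0,1,0,1,0],[0,1,0,1,1,0],[0,1,0,0,1,0,0]] ! i"

lemma w1: "bp_width [0] = 1" by (rule width_unb) (auto simp: unbordered_bd bd_def)
lemma w01: "bp_width [0,Suc 0] = 1" by (rule width_unb) (auto intro!: unb_by)
lemma w11: "bp_width [Suc 0] = 1" by (rule width_unb) (auto simp: unbordered_bd bd_def)

lemma base_w: "i < 8 \<Longrightarrow> bp_width (base i) = min i 5"
proof -
  assume "i < 8"
  then have "i = 0 \<or> i = 1 \<or> i = 2 \<or> i = 3 \<or> i = 4 \<or> i = 5 \<or> i = 6 \<or> i = 7" by auto
  moreover have "bp_width [0,0] = 2"
    by (subst width_by[of 1]) (simp_all add: B_def bd_take upt_rec width_nil)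
  moreover have "bp_width [0,1,0] = 3"
    by (subst width_by[of 1]) (simp_all add: B_def bd_take upt_rec w11)
  moreover have "bp_width [0,1,1,0] = 4"
    by (subst width_by[of 1], simp_all add: B_def bd_take upt_rec)
       (subst width_by[of 1], simp_all add: B_def bd_take upt_rec width_nil)
  moreover have "bp_width [0,1,0,1,0] = 5"
    by (subst width_by[of 1], simp_all add: B_def bd_take upt_rec)
       (subst width_by[of 1], simp_all add: B_def bd_take upt_rec w1)
  moreover have "bp_width [0,1,0,1,1,0] = 5"
    by (subst width_by[of 1], simp_all add: B_def bd_take upt_rec)
       (subst width_by[of 1], simp_all add: B_def bd_take upt_rec w01)
  moreover have "bp_width [0,1,0,0,1,0,0] = 5"
    by (subst width_by[of 1], simp_all add: B_def bd_take upt_rec)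
       (subst width_by[of 2], simp_all add: B_def bd_take upt_rec w1)
  ultimately show ?thesis by (auto simp: base_def width_nil w1)
qed



lemma base_facts:
  assumes "i < 8"
  shows "length (base i) = i" "set (base i) \<subseteq> {0..<2}"
    "\<not> sublist [1,1] (1 # take (length (base i) div 2) (base i))"
    "\<not> sublist [0,0] (1 # take (length (base i) div 2) (base i))"
    "base i = [] \<or> last (base i) = 0"
proof -
  from assms have "i = 0 \<or> i = 1 \<or> i = 2 \<or> i = 3 \<or> i = 4 \<or> i = 5 \<or> i = 6 \<or> i = 7" by auto
  then show "length (base i) = i" "set (base i) \<subseteq> {0..<2}"
    "\<not> sublist [1,1] (1 # take (length (base i) div 2) (base i))"
    "\<not> sublist [0,0] (1 # take (length (base i) div 2) (base i))"
    "base i = [] \<or> last (base i) = 0"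
    by (elim disjE; simp add: base_def sublist_Cons_right)+
qed

lemma X_last: "x0 = [] \<or> last x0 = 0 \<Longrightarrow> X x0 l = [] \<or> last (X x0 l) = 0"
proof (cases l)
  case 0
  assume "x0 = [] \<or> last x0 = 0"
  moreover have "X x0 0 = x0" by (simp add: X_def)
  ultimately show ?thesis using 0 by simp
next
  case (Suc m) then show ?thesis by (simp add: X_Suc)
qed

lemma fam_width:
  assumes "i < 8"
  shows "bp_width (X (base i) l) = 6 * l + min i 5"
proof (induction l)
  case 0 then show ?case using base_w[OF assms] by (simp add: X_def)
next
  case (Suc l)
  have "bp_width (X (base i) (Suc l)) = bp_width (X (base i) l) + 6"
    by (rule fam_step[OF base_facts(3)[OF assms] base_facts(4)[OF assms] X_last[OF base_facts(5)[OF assms]]])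
  then show ?case using Suc by simp
qed

lemma X_set: "set x0 \<subseteq> {0..<2} \<Longrightarrow> set (X x0 l) \<subseteq> {0..<2::nat}"
proof -
  assume a: "set x0 \<subseteq> {0..<2}"
  have "set [0,1,0,1::nat] \<subseteq> {0..<2}" "set [0,1,1,0::nat] \<subseteq> {0..<2}" by auto
  then have "set (pw l [0,1,0,1]) \<subseteq> {0..<2}" "set (pw l [0,1,1,0]) \<subseteq> {0..<2}"
    using pw_set[of l "[0,1,0,1]"] pw_set[of l "[0,1,1,0]"] by (meson order.trans)+
  then show ?thesis unfolding X_def set_append using a by (meson Un_least)
qed

lemma f2: "f 2 n = h n"
proof -
  define S where "S = {bp_width w | w. length w = n \<and> set w \<subseteq> {0..<2::nat}}"
  have fS: "finite S"
  proof -
    have "S \<subseteq> bp_width ` {w. set w \<subseteq> {0..<2::nat} \<and> length w = n}" unfolding S_def by blast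
    moreover have "finite {w. set w \<subseteq> {0..<2::nat} \<and> length w = n}"
      by (rule finite_lists_length_eq) simp
    then have "finite (bp_width ` {w. set w \<subseteq> {0..<2::nat} \<and> length w = n})" by (rule finite_imageI)
    ultimately show ?thesis by (rule finite_subset)
  qed
  have ub: "\<And>y. y \<in> S \<Longrightarrow> y \<le> h n"
  proof -
    fix y assume "y \<in> S"
    then obtain w where "y = bp_width w" "length w = n" "set w \<subseteq> {0..<2}" unfolding S_def by blast
    then show "y \<le> h n" using UB by blast
  qed
  obtain q r where qr: "n = 8*q + r" "r < (8::nat)" by (rule h_cases)
  have "h n \<in> S"
  proof -
    have "length (X (base r) q) = n" using X_len base_facts(1)[OF qr(2)] qr by simp
    moreover have "set (X (base r) q) \<subseteq> {0..<2}" using X_set base_facts(2)[OF qr(2)] by blast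
    moreover have "bp_width (X (base r) q) = h n" using fam_width[OF qr(2)] h_split[OF qr(2)] qr by simp
    ultimately have "\<exists>w. h n = bp_width w \<and> length w = n \<and> set w \<subseteq> {0..<2}"
      by (intro exI[of _ "X (base r) q"]) simp
    then show ?thesis unfolding S_def by simp
  qed
  then have "Max S = h n" using Max_eqI[of S "h n"] fS ub by blast
  then show ?thesis by (simp add: f_def S_def)
qed

theorem theorem6:
  fixes l :: nat
  shows "(\<forall>i::nat. i \<le> 5 \<longrightarrow> f 2 (8 * l + i) = 6 * l + i)
         \<and> f 2 (8 * l + 6) = 6 * l + 5 \<and> f 2 (8 * l + 7) = 6 * l + 5"
proof (intro conjI allI impI)
  fix i :: nat assume "i \<le> 5"
  then have "i < 8" "min i 5 = i" by auto
  then show "f 2 (8 * l + i) = 6 * l + i" using f2 h_split[of i l] by simp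
next
  show "f 2 (8 * l + 6) = 6 * l + 5" using f2 h_split[of 6 l] by simp
next
  show "f 2 (8 * l + 7) = 6 * l + 5" using f2 h_split[of 7 l] by simp
qed

end
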